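(* Let $G=(V,E)$ and $G'=(V',E')$ be finite simple graphs. Then $\overline{X}_G=\overline{X}_{G'}$ if and only if the multisets $\{I_{G|_W}(t): W\subseteq V\}$ and $\{I_{G'|_{W'}}(t): W'\subseteq V'\}$ of independence polynomials of induced subgraphs (one entry per vertex subset, including the empty set) are equal.
   Context: $\overline{X}_G=\sum_\kappa\prod_{v\in V}\prod_{i\in\kappa(v)}x_i$, summed over proper set colorings $\kappa$ of $G$ (maps from $V$ to nonempty subsets of $\mathbb{Z}_{>0}$ with adjacent vertices receiving disjoint sets). For a graph $H$, its independence polynomial is $I_H(t)=\sum_{n\ge0}a_nt^n$ where $a_n$ is the number of independent sets of size $n$ in $H$. $G|_W$ is the induced subgraph on $W$. *)

theory Defs
  imports Main "HOL-Library.Multiset" "HOL-Computational_Algebra.Polynomial"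
begin

definition simple_graph :: "'a set \<Rightarrow> 'a set set \<Rightarrow> bool" where
  "simple_graph V E \<longleftrightarrow> finite V \<and>
     (\<forall>e\<in>E. \<exists>u v. u \<noteq> v \<and> u \<in> V \<and> v \<in> V \<and> e = {u, v})"

definition induced_edges :: "'a set set \<Rightarrow> 'a set \<Rightarrow> 'a set set" where
  "induced_edges E W = {e \<in> E. e \<subseteq> W}"

definition proper_set_coloring :: "'a set \<Rightarrow> 'a set set \<Rightarrow> ('a \<Rightarrow> nat set) \<Rightarrow> bool" where
  "proper_set_coloring V E \<kappa> \<longleftrightarrow>
     (\<forall>v\<in>V. \<kappa> v \<noteq> {} \<and> finite (\<kappa> v) \<and> (\<forall>i\<in>\<kappa> v. 0 < i)) \<and>
     (\<forall>v. v \<notin> V \<longrightarrow> \<kappa> v = {}) \<and>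
     (\<forall>u v. {u, v} \<in> E \<longrightarrow> \<kappa> u \<inter> \<kappa> v = {})"

text \<open>The monomial \<prod>_v \<prod>_{i\<in>\<kappa> v} x_i, encoded as a multiset of variable indices.\<close>
definition coloring_monomial :: "'a set \<Rightarrow> ('a \<Rightarrow> nat set) \<Rightarrow> nat multiset" where
  "coloring_monomial V \<kappa> = (\<Sum>v\<in>V. mset_set (\<kappa> v))"

text \<open>The set-colouring symmetric function \<overline>X_G, as a formal power series in
  x_1, x_2, ...: it is represented by its coefficient function, mapping each
  monomial (a multiset of variable indices) to its coefficient.\<close>
definition Xbar :: "'a set \<Rightarrow> 'a set set \<Rightarrow> nat multiset \<Rightarrow> nat" where
  "Xbar V E m = card {\<kappa>. proper_set_coloring V E \<kappa> \<and> coloring_monomial V \<kappa> = m}"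

definition independent_set :: "'a set \<Rightarrow> 'a set set \<Rightarrow> 'a set \<Rightarrow> bool" where
  "independent_set V E S \<longleftrightarrow> S \<subseteq> V \<and> (\<forall>u\<in>S. \<forall>v\<in>S. {u, v} \<notin> E)"

definition indep_poly :: "'a set \<Rightarrow> 'a set set \<Rightarrow> nat poly" where
  "indep_poly V E = (\<Sum>n\<le>card V. monom (card {S. independent_set V E S \<and> card S = n}) n)"

definition induced_indep_polys :: "'a set \<Rightarrow> 'a set set \<Rightarrow> nat poly multiset" where
  "induced_indep_polys V E = image_mset (\<lambda>W. indep_poly W (induced_edges E W)) (mset_set (Pow V))"

end

theory Submission
  imports Defs "HOL-Library.FuncSet"
begin


lemma fam_sum:
  fixes W :: "'a set" and C :: "nat set" and Q :: "nat \<Rightarrow> 'a set \<Rightarrow> bool"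
  assumes "finite W" "finite C"
  shows "card (PiE C (\<lambda>i. {T. Q i T \<and> T \<subseteq> W})) =
     (\<Sum>U\<in>Pow W. card {S \<in> PiE C (\<lambda>i. {T. Q i T \<and> T \<subseteq> U}). (\<Union>i\<in>C. S i) = U})"
proof -
  let ?X = "PiE C (\<lambda>i. {T. Q i T \<and> T \<subseteq> W})"
  have fX: "finite ?X" using assms by (intro finite_PiE) auto
  have img: "(\<lambda>S. \<Union>i\<in>C. S i) ` ?X \<subseteq> Pow W" by (auto simp: PiE_def Pi_def)
  have "card ?X = (\<Sum>U\<in>Pow W. card {S \<in> ?X. (\<Union>i\<in>C. S i) = U})"
    using sum.group[OF fX _ img, of "\<lambda>_. 1::nat"] assms by simp
  also have "\<dots> = (\<Sum>U\<in>Pow W. card {S \<in> PiE C (\<lambda>i. {T. Q i T \<and> T \<subseteq> U}). (\<Union>i\<in>C. S i) = U})"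
    apply (rule sum.cong[OF refl])
    apply (rule arg_cong[where f=card])
    by (auto simp: PiE_def Pi_def)
  finally show ?thesis .
qed

lemma mobius_step:
  fixes V :: "'a set" and C :: "nat set" and Q :: "nat \<Rightarrow> 'a set \<Rightarrow> bool"
  assumes "finite V" "finite C"
  shows "int (card {S \<in> PiE C (\<lambda>i. {T. Q i T \<and> T \<subseteq> V}). (\<Union>i\<in>C. S i) = V}) =
     (\<Sum>W\<in>Pow V. (-1) ^ (card V - card W) * (\<Prod>i\<in>C. int (card {T. Q i T \<and> T \<subseteq> W})))"
proof -
  have "int (card {S \<in> PiE C (\<lambda>i. {T. Q i T \<and> T \<subseteq> V}). (\<Union>i\<in>C. S i) = V}) =
     (\<Sum>W\<in>Pow V. (-1) ^ (card V - card W) * int (card (PiE C (\<lambda>i. {T. Q i T \<and> T \<subseteq> W}))))"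
    apply (rule inclusion_exclusion_mobius[where f = "\<lambda>U. int (card {S \<in> PiE C (\<lambda>i. {T. Q i T \<and> T \<subseteq> U}). (\<Union>i\<in>C. S i) = U})"])
    using fam_sum[OF _ assms(2), of _ Q] assms(1) by (simp_all flip: of_nat_sum)
  also have "\<dots> = (\<Sum>W\<in>Pow V. (-1) ^ (card V - card W) * (\<Prod>i\<in>C. int (card {T. Q i T \<and> T \<subseteq> W})))"
    using assms(2) by (simp add: card_PiE)
  finally show ?thesis .
qed

lemma count_monomial:
  assumes "finite V" "\<forall>v\<in>V. finite (\<kappa> v)"
  shows "count (coloring_monomial V \<kappa>) i = card {v\<in>V. i \<in> \<kappa> v}"
  using assms unfolding coloring_monomial_def count_sum
  apply (simp add: count_mset_set' sum.If_cases)
  by (simp add: Int_def)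

lemma xbar_cov:
  assumes sg: "simple_graph V E" and m0: "0 \<notin># m"
  shows "Xbar V E m = card {S \<in> PiE (set_mset m) (\<lambda>i. {T. (independent_set V E T \<and> card T = count m i) \<and> T \<subseteq> V}).
             (\<Union>i\<in>set_mset m. S i) = V}"
proof -
  let ?C = "set_mset m"
  let ?P = "{\<kappa>. proper_set_coloring V E \<kappa> \<and> coloring_monomial V \<kappa> = m}"
  let ?B = "{S \<in> PiE ?C (\<lambda>i. {T. (independent_set V E T \<and> card T = count m i) \<and> T \<subseteq> V}).
             (\<Union>i\<in>?C. S i) = V}"
  have fV: "finite V" using sg by (simp add: simple_graph_def)
  define f where "f \<kappa> = restrict (\<lambda>i. {v\<in>V. i \<in> \<kappa> v}) ?C" for \<kappa> :: "'a \<Rightarrow> nat set"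
  define g where "g S = (\<lambda>v. if v \<in> V then {i\<in>?C. v \<in> S i} else {})" for S :: "nat \<Rightarrow> 'a set"
  have Pcnt: "card {v\<in>V. i \<in> \<kappa> v} = count m i" if "\<kappa> \<in> ?P" for \<kappa> i
    using that count_monomial[OF fV, of \<kappa> i] by (auto simp: proper_set_coloring_def)
  have Psub: "\<kappa> v \<subseteq> ?C" if "\<kappa> \<in> ?P" for \<kappa> v
  proof
    fix i assume i: "i \<in> \<kappa> v"
    with that have "v \<in> V" by (auto simp: proper_set_coloring_def)
    then have "card {v\<in>V. i \<in> \<kappa> v} > 0" using i fV by (subst card_gt_0_iff) auto
    then show "i \<in> ?C" using Pcnt[OF that, of i] by auto
  qed
  have "bij_betw f ?P ?B"
  proof (rule bij_betwI[where g = g])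
    show "f \<in> ?P \<rightarrow> ?B"
    proof
      fix \<kappa> assume k: "\<kappa> \<in> ?P"
      have "independent_set V E {v\<in>V. i \<in> \<kappa> v}" for i
        using k unfolding independent_set_def proper_set_coloring_def by blast
      moreover have "(\<Union>i\<in>?C. {v\<in>V. i \<in> \<kappa> v}) = V"
      proof -
        have "v \<in> (\<Union>i\<in>?C. {v\<in>V. i \<in> \<kappa> v})" if "v \<in> V" for v
        proof -
          from k that obtain i where "i \<in> \<kappa> v" unfolding proper_set_coloring_def by blast
          then show ?thesis using Psub[OF k, of v] that by auto
        qed
        then show ?thesis by auto
      qed
      ultimately show "f \<kappa> \<in> ?B" using Pcnt[OF k] by (auto simp: f_def)
    qed
    show "g \<in> ?B \<rightarrow> ?P"
    proof
      fix S assume S: "S \<in> ?B"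
      have propS: "proper_set_coloring V E (g S)"
        unfolding proper_set_coloring_def
      proof (intro conjI ballI allI impI)
        fix v assume v: "v \<in> V"
        from S v have "v \<in> (\<Union>i\<in>?C. S i)" by simp
        then obtain i where "i \<in> ?C" "v \<in> S i" by blast
        then show "g S v \<noteq> {}" using v unfolding g_def by auto
      next
        fix v show "finite (g S v)" by (simp add: g_def)
      next
        fix v i assume "v \<in> V" "i \<in> g S v"
        then have "i \<in> ?C" by (simp add: g_def)
        then have "i \<noteq> 0" using m0 by metis
        then show "0 < i" by simp
      next
        fix v assume "v \<notin> V" then show "g S v = {}" by (simp add: g_def)
      next
        fix u v assume e: "{u, v} \<in> E"
        show "g S u \<inter> g S v = {}"
        proof (rule ccontr)
          assume "g S u \<inter> g S v \<noteq> {}"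
          then obtain i where i: "i \<in> ?C" "u \<in> S i" "v \<in> S i" "u \<in> V" "v \<in> V"
            by (auto simp: g_def split: if_splits)
          then have "independent_set V E (S i)" using S by auto
          then show False using i e by (auto simp: independent_set_def)
        qed
      qed
      have "coloring_monomial V (g S) = m"
      proof (rule multiset_eqI)
        fix i
        have "count (coloring_monomial V (g S)) i = card {v\<in>V. i \<in> g S v}"
          by (rule count_monomial[OF fV]) (simp add: g_def)
        also have "\<dots> = count m i"
        proof (cases "i \<in> ?C")
          case True
          then have "{v\<in>V. i \<in> g S v} = S i" using S by (auto simp: g_def)
          then show ?thesis using S True by auto
        next
          case False
          then have "{v\<in>V. i \<in> g S v} = {}" by (auto simp: g_def)
          then show ?thesis using False by (metis card.empty not_in_iff)
        qed
        finally show "count (coloring_monomial V (g S)) i = count m i" .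
      qed
      then show "g S \<in> ?P" using propS by simp
    qed
    show "g (f \<kappa>) = \<kappa>" if "\<kappa> \<in> ?P" for \<kappa>
    proof
      fix v show "g (f \<kappa>) v = \<kappa> v"
        using Psub[OF that, of v] that
        by (auto simp: f_def g_def proper_set_coloring_def)
    qed
    show "f (g S) = S" if "S \<in> ?B" for S
    proof
      fix i show "f (g S) i = S i"
        using that by (auto simp: f_def g_def PiE_def extensional_def)
    qed
  qed
  then have "card ?P = card ?B" by (rule bij_betw_same_card)
  then show ?thesis by (simp add: Xbar_def)
qed



definition Mo :: "nat poly \<Rightarrow> nat multiset \<Rightarrow> int" where
  "Mo p m = (\<Prod>i\<in>set_mset m. int (coeff p (count m i)))"

lemma Mo_add:
  assumes "k > 0" "j \<notin># m"
  shows "Mo p (m + replicate_mset k j) = int (coeff p k) * Mo p m"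
proof -
  have s: "set_mset (m + replicate_mset k j) = insert j (set_mset m)" using assms by auto
  have "Mo p (m + replicate_mset k j) = int (coeff p (count (m + replicate_mset k j) j)) *
          (\<Prod>i\<in>set_mset m. int (coeff p (count (m + replicate_mset k j) i)))"
  proof -
    have c: "count (m + replicate_mset k j) j = k" using assms(2) by (simp add: not_in_iff)
    have f: "finite (set_mset m)" by simp
    show ?thesis unfolding Mo_def s prod.insert[OF f assms(2)] c ..
  qed
  also have "\<dots> = int (coeff p k) * Mo p m"
  proof -
    have "count (m + replicate_mset k j) i = count m i" if "i \<in># m" for i
      using assms(2) that by (cases "i = j") auto
    then show ?thesis using assms(2) unfolding Mo_def
      by (intro arg_cong2[where f="(*)"] prod.cong refl) (auto simp: not_in_iff)
  qed
  finally show ?thesis .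
qed

lemma moments_claim:
  fixes D :: "nat poly set" and w :: "nat poly \<Rightarrow> int"
  assumes H: "\<forall>m. 0 \<notin># m \<longrightarrow> (\<Sum>p\<in>D. w p * Mo p m) = 0"
  shows "(\<forall>kc\<in>set ks. fst kc > 0) \<Longrightarrow> 0 \<notin># m \<Longrightarrow>
     (\<Sum>p\<in>D. w p * Mo p m * prod_list (map (\<lambda>kc. int (coeff p (fst kc)) - snd kc) ks)) = 0"
proof (induction ks arbitrary: m)
  case Nil
  then show ?case using H by simp
next
  case (Cons kc ks)
  obtain k c where kc: "kc = (k, c)" by (cases kc)
  have k0: "k > 0" using Cons.prems kc by auto
  define j where "j = Suc (Max (insert 0 (set_mset m)))"
  have jn: "j \<notin># m"
  proof
    assume "j \<in># m"
    then have "j \<le> Max (insert 0 (set_mset m))" by (intro Max_ge) auto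
    then show False by (simp add: j_def)
  qed
  let ?m' = "m + replicate_mset k j"
  have m'0: "0 \<notin># ?m'" using Cons.prems(2) j_def by auto
  let ?R = "\<lambda>p. prod_list (map (\<lambda>kc. int (coeff p (fst kc)) - snd kc) ks)"
  have "(\<Sum>p\<in>D. w p * Mo p m * prod_list (map (\<lambda>kc. int (coeff p (fst kc)) - snd kc) (kc # ks)))
      = (\<Sum>p\<in>D. w p * Mo p ?m' * ?R p) - c * (\<Sum>p\<in>D. w p * Mo p m * ?R p)"
    by (simp add: kc Mo_add[OF k0 jn] sum_distrib_left algebra_simps flip: sum_subtractf)
  also have "\<dots> = 0"
    using Cons.IH[of ?m'] Cons.IH[of m] Cons.prems m'0 by simp
  finally show ?case .
qed

lemma moments_zero:
  fixes D :: "nat poly set" and w :: "nat poly \<Rightarrow> int"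
  assumes fD: "finite D"
    and sep: "\<forall>p\<in>D. \<forall>q\<in>D. p \<noteq> q \<longrightarrow> (\<exists>k>0. coeff p k \<noteq> coeff q k)"
    and H: "\<forall>m. 0 \<notin># m \<longrightarrow> (\<Sum>p\<in>D. w p * Mo p m) = 0"
    and p0: "p0 \<in> D"
  shows "w p0 = 0"
proof -
  obtain xs where xs: "set xs = D - {p0}" using fD finite_list by (meson finite_Diff)
  define kf where "kf q = (SOME k. k > 0 \<and> coeff p0 k \<noteq> coeff q k)" for q
  have kf: "kf q > 0 \<and> coeff p0 (kf q) \<noteq> coeff q (kf q)" if "q \<in> D - {p0}" for q
  proof -
    have q: "q \<in> D" "p0 \<noteq> q" using that by auto
    have "\<exists>k. k > 0 \<and> coeff p0 k \<noteq> coeff q k" using sep p0 q by blast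
    then show ?thesis unfolding kf_def by (rule someI_ex)
  qed
  define ks where "ks = map (\<lambda>q. (kf q, int (coeff q (kf q)))) xs"
  have ks0: "\<forall>kc\<in>set ks. fst kc > 0" using kf xs by (auto simp: ks_def)
  let ?R = "\<lambda>p. prod_list (map (\<lambda>kc. int (coeff p (fst kc)) - snd kc) ks)"
  have "(\<Sum>p\<in>D. w p * Mo p {#} * ?R p) = 0"
    by (rule moments_claim[OF H ks0]) simp
  then have S: "(\<Sum>p\<in>D. w p * ?R p) = 0" by (simp add: Mo_def)
  have Rz: "?R p = 0" if "p \<in> D" "p \<noteq> p0" for p
  proof -
    have "p \<in> set xs" using xs that by auto
    then have "0 \<in> set (map (\<lambda>kc. int (coeff p (fst kc)) - snd kc) ks)"
      by (auto simp: ks_def image_iff intro!: bexI[of _ p])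
    then show ?thesis by (simp add: prod_list_zero_iff)
  qed
  have Rnz: "?R p0 \<noteq> 0"
    using kf xs by (auto simp: ks_def prod_list_zero_iff)
  have "(\<Sum>p\<in>D. w p * ?R p) = w p0 * ?R p0 + (\<Sum>p\<in>D - {p0}. w p * ?R p)"
    using fD p0 by (simp add: sum.remove)
  also have "(\<Sum>p\<in>D - {p0}. w p * ?R p) = 0"
    using Rz by (intro sum.neutral) auto
  finally show ?thesis using S Rnz by simp
qed



lemma coeff_indep:
  assumes "finite W"
  shows "coeff (indep_poly W F) k = card {S. independent_set W F S \<and> card S = k}"
proof -
  have "coeff (indep_poly W F) k = (\<Sum>n\<le>card W. if n = k then card {S. independent_set W F S \<and> card S = n} else 0)"
    unfolding indep_poly_def coeff_sum coeff_monom by (intro sum.cong) auto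
  also have "\<dots> = (if k \<in> {..card W} then card {S. independent_set W F S \<and> card S = k} else 0)"
    by (rule sum.delta) simp
  also have "\<dots> = card {S. independent_set W F S \<and> card S = k}"
  proof (cases "k \<le> card W")
    case False
    have emp: "{S. independent_set W F S \<and> card S = k} = {}"
      using False assms card_mono by (fastforce simp: independent_set_def)
    show ?thesis unfolding emp using False by simp
  qed simp
  finally show ?thesis .
qed

lemma coeff_indep0:
  assumes "finite W"
  shows "coeff (indep_poly W F) 0 = 1"
proof -
  have "{S. independent_set W F S \<and> card S = 0} = {{}}"
    using assms by (auto simp: independent_set_def) (metis card_0_eq empty_iff rev_finite_subset)
  then show ?thesis using coeff_indep[OF assms] by simp
qed

lemma coeff_indep1:
  assumes "finite W" "\<forall>v. {v} \<notin> F"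
  shows "coeff (indep_poly W F) 1 = card W"
proof -
  have "{S. independent_set W F S \<and> card S = 1} = (\<lambda>v. {v}) ` W"
    using assms by (auto simp: independent_set_def card_1_singleton_iff)
  then show ?thesis using coeff_indep[OF assms(1)] by (simp add: card_image)
qed

lemma noloop:
  assumes "simple_graph V E"
  shows "{v} \<notin> induced_edges E W"
proof
  assume "{v} \<in> induced_edges E W"
  then have "{v} \<in> E" by (simp add: induced_edges_def)
  then obtain a b where "a \<noteq> b" "{v} = {a, b}" using assms by (auto simp: simple_graph_def)
  then show False by (metis insertCI singletonD)
qed

lemma indep_sub:
  assumes "W \<subseteq> V"
  shows "(independent_set V E T \<and> T \<subseteq> W) \<longleftrightarrow> independent_set W (induced_edges E W) T"
proof
  assume "independent_set V E T \<and> T \<subseteq> W"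
  then show "independent_set W (induced_edges E W) T"
    unfolding independent_set_def induced_edges_def by blast
next
  assume a: "independent_set W (induced_edges E W) T"
  then have "T \<subseteq> W" by (simp add: independent_set_def)
  then show "independent_set V E T \<and> T \<subseteq> W"
    using a assms unfolding independent_set_def induced_edges_def by blast
qed

definition sgnp :: "nat \<Rightarrow> nat poly \<Rightarrow> int" where
  "sgnp n p = (-1) ^ (n - coeff p 1)"

lemma xbar_formula:
  assumes sg: "simple_graph V E" and m0: "0 \<notin># m"
  shows "int (Xbar V E m) = (\<Sum>W\<in>Pow V. sgnp (card V) (indep_poly W (induced_edges E W)) *
           Mo (indep_poly W (induced_edges E W)) m)"
proof -
  have fV: "finite V" using sg by (simp add: simple_graph_def)
  have "int (Xbar V E m) = (\<Sum>W\<in>Pow V. (-1) ^ (card V - card W) *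
     (\<Prod>i\<in>set_mset m. int (card {T. (independent_set V E T \<and> card T = count m i) \<and> T \<subseteq> W})))"
    unfolding xbar_cov[OF sg m0]
    by (rule mobius_step[where Q = "\<lambda>i T. independent_set V E T \<and> card T = count m i" and C = "set_mset m", OF fV finite_set_mset])
  also have "\<dots> = (\<Sum>W\<in>Pow V. sgnp (card V) (indep_poly W (induced_edges E W)) *
           Mo (indep_poly W (induced_edges E W)) m)"
  proof (rule sum.cong[OF refl])
    fix W assume W: "W \<in> Pow V"
    then have fW: "finite W" using fV finite_subset by auto
    have e: "{T. (independent_set V E T \<and> card T = c) \<and> T \<subseteq> W} =
             {S. independent_set W (induced_edges E W) S \<and> card S = c}" for c
      using indep_sub[of W V E] W by auto
    show "(-1) ^ (card V - card W) *
     (\<Prod>i\<in>set_mset m. int (card {T. (independent_set V E T \<and> card T = count m i) \<and> T \<subseteq> W})) =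
      sgnp (card V) (indep_poly W (induced_edges E W)) * Mo (indep_poly W (induced_edges E W)) m"
      unfolding e sgnp_def Mo_def coeff_indep1[OF fW allI[OF noloop[OF sg]]] unfolding coeff_indep[OF fW] ..
  qed
  finally show ?thesis .
qed

lemma xbar_zero:
  assumes sg: "simple_graph V E" and m0: "0 \<in># m"
  shows "Xbar V E m = 0"
proof -
  have fV: "finite V" using sg by (simp add: simple_graph_def)
  have emp: "{\<kappa>. proper_set_coloring V E \<kappa> \<and> coloring_monomial V \<kappa> = m} = {}"
  proof (rule ccontr)
    assume "{\<kappa>. proper_set_coloring V E \<kappa> \<and> coloring_monomial V \<kappa> = m} \<noteq> {}"
    then obtain \<kappa> where k: "proper_set_coloring V E \<kappa>" "coloring_monomial V \<kappa> = m" by auto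
    have "count m 0 = card {v\<in>V. 0 \<in> \<kappa> v}"
      using count_monomial[OF fV, of \<kappa> 0] k by (auto simp: proper_set_coloring_def)
    then have "card {v\<in>V. 0 \<in> \<kappa> v} > 0" using m0 by (metis count_eq_zero_iff gr0I)
    then obtain v where "v \<in> V" "0 \<in> \<kappa> v" by (metis (no_types, lifting) card.empty empty_Collect_eq less_irrefl)
    then show False using k(1) by (auto simp: proper_set_coloring_def)
  qed
  show ?thesis unfolding Xbar_def emp by simp
qed

lemma xbar_group:
  assumes sg: "simple_graph V E" and m0: "0 \<notin># m" and fD: "finite D"
    and sub: "(\<lambda>W. indep_poly W (induced_edges E W)) ` Pow V \<subseteq> D"
  shows "int (Xbar V E m) = (\<Sum>p\<in>D. sgnp (card V) p * int (count (induced_indep_polys V E) p) * Mo p m)"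
proof -
  let ?I = "\<lambda>W. indep_poly W (induced_edges E W)"
  have fV: "finite V" using sg by (simp add: simple_graph_def)
  have cnt: "count (induced_indep_polys V E) p = card {W \<in> Pow V. ?I W = p}" for p
    unfolding induced_indep_polys_def count_image_mset' using fV
    by (simp add: eq_commute)
  have "int (Xbar V E m) = (\<Sum>W\<in>Pow V. sgnp (card V) (?I W) * Mo (?I W) m)"
    by (rule xbar_formula[OF sg m0])
  also have "\<dots> = (\<Sum>p\<in>D. \<Sum>W\<in>{W \<in> Pow V. ?I W = p}. sgnp (card V) (?I W) * Mo (?I W) m)"
    using sum.group[OF _ fD sub, of "\<lambda>W. sgnp (card V) (?I W) * Mo (?I W) m"] fV by simp
  also have "\<dots> = (\<Sum>p\<in>D. sgnp (card V) p * int (count (induced_indep_polys V E) p) * Mo p m)"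
  proof (rule sum.cong[OF refl])
    fix p
    have "(\<Sum>W\<in>{W \<in> Pow V. ?I W = p}. sgnp (card V) (?I W) * Mo (?I W) m) =
          (\<Sum>W\<in>{W \<in> Pow V. ?I W = p}. sgnp (card V) p * Mo p m)"
      by (rule sum.cong) auto
    also have "\<dots> = of_nat (card {W \<in> Pow V. ?I W = p}) * (sgnp (card V) p * Mo p m)"
      by (rule sum_constant)
    finally show "(\<Sum>W\<in>{W \<in> Pow V. ?I W = p}. sgnp (card V) (?I W) * Mo (?I W) m) =
          sgnp (card V) p * int (count (induced_indep_polys V E) p) * Mo p m"
      unfolding cnt by (simp only: ac_simps)
  qed
  finally show ?thesis .
qed



lemma abs_sgnp: "\<bar>sgnp n p\<bar> = 1"
  by (simp add: sgnp_def power_abs)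

theorem corollary1p6:
  fixes V :: "'a set" and E :: "'a set set" and V' :: "'b set" and E' :: "'b set set"
  assumes "simple_graph V E" and "simple_graph V' E'"
  shows "Xbar V E = Xbar V' E' \<longleftrightarrow> induced_indep_polys V E = induced_indep_polys V' E'"
proof -
  let ?I = "\<lambda>W. indep_poly W (induced_edges E W)"
  let ?I' = "\<lambda>W. indep_poly W (induced_edges E' W)"
  let ?P = "induced_indep_polys V E"
  let ?P' = "induced_indep_polys V' E'"
  have fV: "finite V" using assms(1) by (simp add: simple_graph_def)
  have fV': "finite V'" using assms(2) by (simp add: simple_graph_def)
  define D where "D = ?I ` Pow V \<union> ?I' ` Pow V'"
  have fD: "finite D" using fV fV' by (simp add: D_def)
  have s1: "?I ` Pow V \<subseteq> D" and s2: "?I' ` Pow V' \<subseteq> D" by (auto simp: D_def)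
  have G1: "int (Xbar V E m) = (\<Sum>p\<in>D. sgnp (card V) p * int (count ?P p) * Mo p m)" if "0 \<notin># m" for m
    by (rule xbar_group[OF assms(1) that fD s1])
  have G2: "int (Xbar V' E' m) = (\<Sum>p\<in>D. sgnp (card V') p * int (count ?P' p) * Mo p m)" if "0 \<notin># m" for m
    by (rule xbar_group[OF assms(2) that fD s2])
  have setP: "set_mset ?P = ?I ` Pow V" using fV by (simp add: induced_indep_polys_def)
  have setP': "set_mset ?P' = ?I' ` Pow V'" using fV' by (simp add: induced_indep_polys_def)
  show ?thesis
  proof
    assume X: "Xbar V E = Xbar V' E'"
    define w where "w p = sgnp (card V) p * int (count ?P p) - sgnp (card V') p * int (count ?P' p)" for p
    have H: "\<forall>m. 0 \<notin># m \<longrightarrow> (\<Sum>p\<in>D. w p * Mo p m) = 0"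
    proof (intro allI impI)
      fix m :: "nat multiset" assume m0: "0 \<notin># m"
      have "(\<Sum>p\<in>D. w p * Mo p m) = (\<Sum>p\<in>D. sgnp (card V) p * int (count ?P p) * Mo p m)
             - (\<Sum>p\<in>D. sgnp (card V') p * int (count ?P' p) * Mo p m)"
        unfolding w_def left_diff_distrib sum_subtractf ..
      also have "\<dots> = int (Xbar V E m) - int (Xbar V' E' m)" using G1[OF m0] G2[OF m0] by simp
      also have "\<dots> = 0" using X by simp
      finally show "(\<Sum>p\<in>D. w p * Mo p m) = 0" .
    qed
    have c0: "coeff p 0 = 1" if "p \<in> D" for p
      using that fV fV' by (auto simp: D_def; metis One_nat_def coeff_indep0 finite_subset)
    have sep: "\<forall>p\<in>D. \<forall>q\<in>D. p \<noteq> q \<longrightarrow> (\<exists>k>0. coeff p k \<noteq> coeff q k)"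
    proof (intro ballI impI)
      fix p q assume pq: "p \<in> D" "q \<in> D" "p \<noteq> q"
      then obtain k where k: "coeff p k \<noteq> coeff q k" by (meson poly_eqI)
      then have "k \<noteq> 0" using c0[OF pq(1)] c0[OF pq(2)] by (cases k) auto
      then show "\<exists>k>0. coeff p k \<noteq> coeff q k" using k by blast
    qed
    show "?P = ?P'"
    proof (rule multiset_eqI)
      fix p
      show "count ?P p = count ?P' p"
      proof (cases "p \<in> D")
        case True
        have "w p = 0" by (rule moments_zero[OF fD sep H True])
        then have "sgnp (card V) p * int (count ?P p) = sgnp (card V') p * int (count ?P' p)"
          by (simp add: w_def)
        then have "\<bar>sgnp (card V) p * int (count ?P p)\<bar> = \<bar>sgnp (card V') p * int (count ?P' p)\<bar>"
          by simp
        then show ?thesis by (simp add: abs_mult abs_sgnp)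
      next
        case False
        then have "p \<notin># ?P" "p \<notin># ?P'" using setP setP' s1 s2 by auto
        then show ?thesis by (simp add: not_in_iff)
      qed
    qed
  next
    assume P: "?P = ?P'"
    have "size ?P = 2 ^ card V" using fV by (simp add: induced_indep_polys_def card_Pow)
    moreover have "size ?P' = 2 ^ card V'" using fV' by (simp add: induced_indep_polys_def card_Pow)
    ultimately have cV: "card V = card V'" using P by simp
    show "Xbar V E = Xbar V' E'"
    proof
      fix m
      show "Xbar V E m = Xbar V' E' m"
      proof (cases "0 \<in># m")
        case True
        then show ?thesis using xbar_zero[OF assms(1)] xbar_zero[OF assms(2)] by simp
      next
        case False
        have "int (Xbar V E m) = int (Xbar V' E' m)"
          unfolding G1[OF False] G2[OF False] P cV ..
        then show ?thesis by simp
      qed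
    qed
  qed
qed

end
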